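(* Let $A$ be a set, $T=A^*$, $Y$ a semilattice and $\cdot$ a left partial action of $T$ on $Y$ satisfying axioms (A), (B), (C) which is a partially defined action, with reverse right partial action $\circ$. Let $\sim$ and $\approx$ be the equivalence relations on $Y\times T$ defined in the context. Then: (1) every $\sim$-class $B$ contains a unique element $(x,w)$ (called canonical) with $|w|=\min\{|u|\colon (y,u)\in B\}$; moreover, if $(x,w)$ is canonical and $(y,u)\sim(x,w)$, then $x\circ t$ is defined and $(y,u)=(x\circ t,wt)$ for some $t\in A^*$; (2) the equivalences $\sim$ and $\approx$ on $Y\times T$ coincide.
   Context: $A^*$ is the free monoid on $A$ and $|w|$ is the length of the word $w$ (the empty word has length $0$). A left partial action of $T$ on $Y$: $1\cdot y=y$ always defined; if $t\cdot y$, $s\cdot(t\cdot y)$ are defined then $(st)\cdot y$ is defined and equals it. With $\varphi_t\colon y\mapsto t\cdot y$: (A) $\mathrm{dom}\varphi_t$, $\mathrm{ran}\varphi_t$ are order ideals; (B) $\varphi_t$ is an order-isomorphism between them; (C) $\mathrm{dom}\varphi_t\ne\varnothing$. It is a partially defined action if $(st)\cdot x$ is defined iff $t\cdot x$ and $s\cdot(t\cdot x)$ are defined. Reverse: $y\circ t$ defined iff $y\in\mathrm{ran}\varphi_t$, and $y\circ t=\varphi_t^{-1}(y)$. For $(x,s),(y,t)\in Y\times T$ put $(x,s)\to(y,t)$ if there is $p\in T$ with $s=tp$, $p\cdot x$ defined and $p\cdot x=y$. Let $\sim$ be the equivalence relation generated by $\to$, with classes $[x,s]_\sim$. On $(Y\times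 T)/\!\sim$ set $C\ge D$ if there are $(x,s)\in C$ and $(y,s)\in D$ with $x\ge y$ (a preorder). Let $(x,s)\approx(y,t)$ iff $[x,s]_\sim\le[y,t]_\sim$ and $[y,t]_\sim\le[x,s]_\sim$. *)

theory Defs
  imports Main
begin

text \<open>A left partial action of T = A* on Y is a map
  act :: 'a list => 'y => 'y option, where act t y = Some z means that t . y is defined
  and equals z.\<close>

definition order_ideal :: "'y::order set \<Rightarrow> bool" where
  "order_ideal S \<longleftrightarrow> (\<forall>x\<in>S. \<forall>y. y \<le> x \<longrightarrow> y \<in> S)"

definition pdom :: "('a list \<Rightarrow> 'y \<Rightarrow> 'y option) \<Rightarrow> 'a list \<Rightarrow> 'y set" where
  "pdom act t = {y. act t y \<noteq> None}"

definition pran :: "('a list \<Rightarrow> 'y \<Rightarrow> 'y option) \<Rightarrow> 'a list \<Rightarrow> 'y set" where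
  "pran act t = {z. \<exists>y. act t y = Some z}"

definition left_partial_action :: "('a list \<Rightarrow> 'y \<Rightarrow> 'y option) \<Rightarrow> bool" where
  "left_partial_action act \<longleftrightarrow>
     (\<forall>y. act [] y = Some y) \<and>
     (\<forall>s t y z w. act t y = Some z \<longrightarrow> act s z = Some w \<longrightarrow> act (s @ t) y = Some w)"

definition axioms_ABC :: "('a list \<Rightarrow> 'y::semilattice_inf \<Rightarrow> 'y option) \<Rightarrow> bool" where
  "axioms_ABC act \<longleftrightarrow>
     (\<forall>t. order_ideal (pdom act t) \<and> order_ideal (pran act t)) \<and>
     (\<forall>t. bij_betw (\<lambda>y. the (act t y)) (pdom act t) (pran act t) \<and>
          (\<forall>x\<in>pdom act t. \<forall>y\<in>pdom act t. x \<le> y \<longleftrightarrow> the (act t x) \<le> the (act t y))) \<and>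
     (\<forall>t. pdom act t \<noteq> {})"

definition partially_defined_action :: "('a list \<Rightarrow> 'y \<Rightarrow> 'y option) \<Rightarrow> bool" where
  "partially_defined_action act \<longleftrightarrow>
     (\<forall>s t x. act (s @ t) x \<noteq> None \<longleftrightarrow>
        (\<exists>z. act t x = Some z \<and> act s z \<noteq> None))"

definition rev_act :: "('a list \<Rightarrow> 'y \<Rightarrow> 'y option) \<Rightarrow> 'y \<Rightarrow> 'a list \<Rightarrow> 'y option" where
  "rev_act act y t = (if y \<in> pran act t then Some (THE x. act t x = Some y) else None)"

definition step_rel :: "('a list \<Rightarrow> 'y \<Rightarrow> 'y option) \<Rightarrow> 'y \<times> 'a list \<Rightarrow> 'y \<times> 'a list \<Rightarrow> bool" where
  "step_rel act P Q \<longleftrightarrow> (\<exists>p. snd P = snd Q @ p \<and> act p (fst P) = Some (fst Q))"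

definition sim :: "('a list \<Rightarrow> 'y \<Rightarrow> 'y option) \<Rightarrow> 'y \<times> 'a list \<Rightarrow> 'y \<times> 'a list \<Rightarrow> bool" where
  "sim act = equivclp (step_rel act)"

definition cls_ge :: "('a list \<Rightarrow> 'y::order \<Rightarrow> 'y option) \<Rightarrow> 'y \<times> 'a list \<Rightarrow> 'y \<times> 'a list \<Rightarrow> bool" where
  "cls_ge act P Q \<longleftrightarrow> (\<exists>x y s. sim act (x, s) P \<and> sim act (y, s) Q \<and> y \<le> x)"

definition approx :: "('a list \<Rightarrow> 'y::order \<Rightarrow> 'y option) \<Rightarrow> 'y \<times> 'a list \<Rightarrow> 'y \<times> 'a list \<Rightarrow> bool" where
  "approx act P Q \<longleftrightarrow> cls_ge act Q P \<and> cls_ge act P Q"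

definition canonical :: "('a list \<Rightarrow> 'y \<Rightarrow> 'y option) \<Rightarrow> 'y \<times> 'a list \<Rightarrow> bool" where
  "canonical act P \<longleftrightarrow> length (snd P) = (LEAST n. \<exists>Q. sim act Q P \<and> n = length (snd Q))"

end

theory Submission
  imports Defs
begin

definition reduced :: "('a list \<Rightarrow> 'y \<Rightarrow> 'y option) \<Rightarrow> 'y \<times> 'a list \<Rightarrow> bool" where
  "reduced act P \<longleftrightarrow> (\<forall>w a. snd P = w @ [a] \<longrightarrow> act [a] (fst P) = None)"

definition isnf :: "('a list \<Rightarrow> 'y \<Rightarrow> 'y option) \<Rightarrow> 'y \<times> 'a list \<Rightarrow> 'y \<times> 'a list \<Rightarrow> bool" where
  "isnf act P Q \<longleftrightarrow> reduced act Q \<and> (\<exists>p. snd P = snd Q @ p \<and> act p (fst P) = Some (fst Q))"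

definition nf :: "('a list \<Rightarrow> 'y \<Rightarrow> 'y option) \<Rightarrow> 'y \<times> 'a list \<Rightarrow> 'y \<times> 'a list" where
  "nf act P = (THE Q. isnf act P Q)"

lemma lpa_comp:
  assumes "left_partial_action act" "act t x = Some z" "act s z = Some w"
  shows "act (s @ t) x = Some w"
  using assms unfolding left_partial_action_def by blast

lemma lpa_nil: "left_partial_action act \<Longrightarrow> act [] x = Some x"
  unfolding left_partial_action_def by blast

lemma decomp:
  assumes "left_partial_action act" "partially_defined_action act" "act (s @ t) x = Some v"
  shows "\<exists>z. act t x = Some z \<and> act s z = Some v"
proof -
  from assms(2,3) obtain z where z: "act t x = Some z" "act s z \<noteq> None"
    unfolding partially_defined_action_def by fastforce
  then obtain v' where v': "act s z = Some v'" by auto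
  from lpa_comp[OF assms(1) z(1) v'] assms(3) have "v' = v" by simp
  with z v' show ?thesis by auto
qed

lemma nf_exists:
  assumes "left_partial_action act"
  shows "\<exists>Q. isnf act (x, s) Q"
proof (induction "length s" arbitrary: x s rule: less_induct)
  case less
  show ?case
  proof (cases s rule: rev_exhaust)
    case Nil
    then show ?thesis unfolding isnf_def reduced_def
      by (intro exI[of _ "(x, [])"]) (auto simp: lpa_nil[OF assms])
  next
    case (snoc s' a)
    show ?thesis
    proof (cases "act [a] x")
      case None
      then show ?thesis unfolding isnf_def reduced_def using snoc
        by (intro exI[of _ "(x, s)"]) (auto simp: lpa_nil[OF assms])
    next
      case (Some x1)
      from less[of s' x1] snoc obtain Q where Q: "isnf act (x1, s') Q" by auto
      then obtain p where p: "s' = snd Q @ p" "act p x1 = Some (fst Q)" "reduced act Q"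
        unfolding isnf_def by auto
      have "act (p @ [a]) x = Some (fst Q)" using lpa_comp[OF assms Some p(2)] .
      then show ?thesis using p snoc unfolding isnf_def by (intro exI[of _ Q]) auto
    qed
  qed
qed

lemma nf_unique1:
  assumes "left_partial_action act" "partially_defined_action act"
    and "reduced act (x0, w0)" "act p x = Some x0"
    and "act (us @ p) x = Some x1" "w0 = w1 @ us"
  shows "x1 = x0 \<and> us = []"
proof -
  from decomp[OF assms(1,2,5)] assms(4) have h: "act us x0 = Some x1" by auto
  show ?thesis
  proof (cases us rule: rev_exhaust)
    case Nil
    then show ?thesis using h lpa_nil[OF assms(1)] by simp
  next
    case (snoc us' a)
    from decomp[OF assms(1,2)] h snoc obtain z where "act [a] x0 = Some z" by fastforce
    moreover have "w0 = (w1 @ us') @ [a]" using assms(6) snoc by simp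
    ultimately show ?thesis using assms(3) unfolding reduced_def by auto
  qed
qed

lemma nf_unique:
  assumes "left_partial_action act" "partially_defined_action act"
    and "isnf act P Q1" "isnf act P Q2"
  shows "Q1 = Q2"
proof -
  obtain x0 w0 x1 w1 where q: "Q1 = (x0, w0)" "Q2 = (x1, w1)" by fastforce
  from assms(3,4) q obtain p q' where
    h: "reduced act (x0, w0)" "reduced act (x1, w1)" "snd P = w0 @ p" "act p (fst P) = Some x0"
       "snd P = w1 @ q'" "act q' (fst P) = Some x1"
    unfolding isnf_def by auto
  from h(3,5) have "w0 @ p = w1 @ q'" by simp
  then obtain us where "(w0 = w1 @ us \<and> us @ p = q') \<or> (w0 @ us = w1 \<and> p = us @ q')"
    unfolding append_eq_append_conv2 by blast
  then show ?thesis
  proof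
    assume a: "w0 = w1 @ us \<and> us @ p = q'"
    with nf_unique1[OF assms(1,2) h(1) h(4), of us x1 w1] h(6) q show ?thesis by auto
  next
    assume a: "w0 @ us = w1 \<and> p = us @ q'"
    with nf_unique1[OF assms(1,2) h(2) h(6), of us x0 w0] h(4) q show ?thesis by auto
  qed
qed

lemma nf_isnf:
  assumes "left_partial_action act" "partially_defined_action act"
  shows "isnf act P (nf act P)"
proof -
  obtain x s where P: "P = (x, s)" by fastforce
  from nf_exists[OF assms(1), of x s] obtain Q where "isnf act P Q" using P by auto
  then have q: "isnf act P Q" .
  have "\<And>R. isnf act P R \<Longrightarrow> R = Q" using nf_unique[OF assms _ q] by blast
  then show ?thesis unfolding nf_def using q by (rule theI[where a=Q, rotated])
qed

lemma nf_eq: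
  assumes "left_partial_action act" "partially_defined_action act" "isnf act P Q"
  shows "nf act P = Q"
  using nf_unique[OF assms(1,2) nf_isnf[OF assms(1,2)] assms(3)] .

lemma nf_step:
  assumes "left_partial_action act" "partially_defined_action act" "step_rel act P R"
  shows "nf act P = nf act R"
proof -
  from assms(3) obtain p where p: "snd P = snd R @ p" "act p (fst P) = Some (fst R)"
    unfolding step_rel_def by auto
  from nf_isnf[OF assms(1,2), of R] obtain q where
    q: "reduced act (nf act R)" "snd R = snd (nf act R) @ q" "act q (fst R) = Some (fst (nf act R))"
    unfolding isnf_def by auto
  have "act (q @ p) (fst P) = Some (fst (nf act R))" using lpa_comp[OF assms(1) p(2) q(3)] .
  then have "isnf act P (nf act R)" using p q unfolding isnf_def by auto
  then show ?thesis by (rule nf_eq[OF assms(1,2)])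
qed

lemma sim_nf:
  assumes "left_partial_action act" "partially_defined_action act"
  shows "sim act P Q \<longleftrightarrow> nf act P = nf act Q"
proof
  assume "sim act P Q"
  then show "nf act P = nf act Q" unfolding sim_def
    by (induction rule: equivclp_induct) (auto dest: nf_step[OF assms])
next
  assume e: "nf act P = nf act Q"
  have "\<And>R. step_rel act R (nf act R)"
    using nf_isnf[OF assms] unfolding isnf_def step_rel_def by auto
  then have "sim act P (nf act P)" "sim act Q (nf act Q)" unfolding sim_def
    by (metis prod.collapse r_into_equivclp)+
  then have "sim act P (nf act Q)" using e by simp
  moreover have "sim act (nf act Q) Q" using \<open>sim act Q (nf act Q)\<close> unfolding sim_def
    by (rule equivclp_sym)
  ultimately show "sim act P Q" unfolding sim_def by (rule equivclp_trans)
qed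

lemma sim_nf_self:
  assumes "left_partial_action act" "partially_defined_action act"
  shows "sim act P (nf act P)"
proof -
  have "step_rel act P (nf act P)" using nf_isnf[OF assms, of P] unfolding isnf_def step_rel_def by auto
  then show ?thesis unfolding sim_def by (rule r_into_equivclp)
qed

lemma nf_nf:
  assumes "left_partial_action act" "partially_defined_action act"
  shows "nf act (nf act P) = nf act P"
  using sim_nf_self[OF assms, of P] sim_nf[OF assms] by simp

lemma canonical_iff:
  assumes "left_partial_action act" "partially_defined_action act"
  shows "canonical act P \<longleftrightarrow> nf act P = P"
proof -
  have L: "(LEAST n. \<exists>Q. sim act Q P \<and> n = length (snd Q)) = length (snd (nf act P))"
  proof (rule Least_equality)
    show "\<exists>Q. sim act Q P \<and> length (snd (nf act P)) = length (snd Q)"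
      by (intro exI[of _ "nf act P"]) (simp add: sim_nf[OF assms] nf_nf[OF assms])
  next
    fix n assume "\<exists>Q. sim act Q P \<and> n = length (snd Q)"
    then obtain Q where Q: "nf act Q = nf act P" "n = length (snd Q)" using sim_nf[OF assms] by auto
    from nf_isnf[OF assms, of Q] Q(1) obtain p where "snd Q = snd (nf act P) @ p"
      unfolding isnf_def by auto
    then show "length (snd (nf act P)) \<le> n" using Q(2) by simp
  qed
  from nf_isnf[OF assms, of P] obtain p where
    p: "reduced act (nf act P)" "snd P = snd (nf act P) @ p" "act p (fst P) = Some (fst (nf act P))"
    unfolding isnf_def by auto
  show ?thesis
  proof
    assume "canonical act P"
    then have "p = []" using L p(2) unfolding canonical_def by simp
    then show "nf act P = P" using p lpa_nil[OF assms(1)] by (cases P; cases "nf act P") auto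
  next
    assume "nf act P = P"
    then show "canonical act P" using L unfolding canonical_def by simp
  qed
qed

lemma mono_act:
  assumes "axioms_ABC act" "act p x = Some x0" "y \<le> x"
  shows "\<exists>y'. act p y = Some y' \<and> y' \<le> x0"
proof -
  have xd: "x \<in> pdom act p" using assms(2) unfolding pdom_def by auto
  have "order_ideal (pdom act p)" using assms(1) unfolding axioms_ABC_def by blast
  then have yd: "y \<in> pdom act p" using xd assms(3) unfolding order_ideal_def by blast
  then obtain y' where y': "act p y = Some y'" unfolding pdom_def by auto
  have "the (act p y) \<le> the (act p x)" using assms(1) xd yd assms(3) unfolding axioms_ABC_def by blast
  then show ?thesis using y' assms(2) by auto
qed

lemma cls_ge_nf:
  assumes "left_partial_action act" "partially_defined_action act" "axioms_ABC act"
    and "cls_ge act P Q"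
  shows "\<exists>y'. y' \<le> fst (nf act P) \<and> nf act (y', snd (nf act P)) = nf act Q"
proof -
  from assms(4) obtain x y s where h: "sim act (x, s) P" "sim act (y, s) Q" "y \<le> x"
    unfolding cls_ge_def by auto
  from h sim_nf[OF assms(1,2)] have e: "nf act (x, s) = nf act P" "nf act (y, s) = nf act Q" by auto
  from nf_isnf[OF assms(1,2), of "(x, s)"] e obtain p where
    p: "s = snd (nf act P) @ p" "act p x = Some (fst (nf act P))" unfolding isnf_def by auto
  from mono_act[OF assms(3) p(2) h(3)] obtain y' where y': "act p y = Some y'" "y' \<le> fst (nf act P)"
    by auto
  have "step_rel act (y, s) (y', snd (nf act P))" using p y' unfolding step_rel_def by auto
  then have "nf act (y, s) = nf act (y', snd (nf act P))" by (rule nf_step[OF assms(1,2)])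
  then show ?thesis using y' e by auto
qed

theorem lemma5p2:
  fixes act :: "'a list \<Rightarrow> 'y::semilattice_inf \<Rightarrow> 'y option"
  assumes "left_partial_action act"
    and "axioms_ABC act"
    and "partially_defined_action act"
  shows "(\<forall>B. \<exists>!P. sim act P B \<and> canonical act P)
       \<and> (\<forall>x w y u. canonical act (x, w) \<longrightarrow> sim act (y, u) (x, w) \<longrightarrow>
            (\<exists>t. rev_act act x t = Some y \<and> u = w @ t))
       \<and> sim act = approx act"
proof (intro conjI allI impI)
  note A = assms(1,3)
  have nfnf: "\<And>P. nf act (nf act P) = nf act P" by (rule nf_nf[OF A])
  fix B
  show "\<exists>!P. sim act P B \<and> canonical act P"
  proof (rule ex1I[of _ "nf act B"])
    have "sim act (nf act B) B" unfolding sim_nf[OF A] nfnf ..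
    moreover have "canonical act (nf act B)" unfolding canonical_iff[OF A] nfnf ..
    ultimately show "sim act (nf act B) B \<and> canonical act (nf act B)" ..
  next
    fix P assume "sim act P B \<and> canonical act P"
    then have "nf act P = nf act B" "nf act P = P" unfolding sim_nf[OF A] canonical_iff[OF A] by auto
    then show "P = nf act B" by simp
  qed
next
  note A = assms(1,3)
  fix x w y u
  assume c: "canonical act (x, w)" and s: "sim act (y, u) (x, w)"
  have "nf act (y, u) = nf act (x, w)" using s unfolding sim_nf[OF A] .
  moreover have "nf act (x, w) = (x, w)" using c unfolding canonical_iff[OF A] .
  ultimately have "nf act (y, u) = (x, w)" by simp
  with nf_isnf[OF A, of "(y,u)"] obtain p where p: "u = w @ p" "act p y = Some x"
    unfolding isnf_def by auto
  have ran: "x \<in> pran act p" using p(2) unfolding pran_def by auto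
  have inj: "inj_on (\<lambda>y. the (act p y)) (pdom act p)"
  proof -
    have "bij_betw (\<lambda>y. the (act p y)) (pdom act p) (pran act p)"
      using assms(2) unfolding axioms_ABC_def by simp
    then show ?thesis by (rule bij_betw_imp_inj_on)
  qed
  have "(THE z. act p z = Some x) = y"
  proof (rule the_equality)
    show "act p y = Some x" by fact
  next
    fix z assume "act p z = Some x"
    then show "z = y" using p(2) inj unfolding inj_on_def pdom_def by force
  qed
  then show "\<exists>t. rev_act act x t = Some y \<and> u = w @ t"
    using ran p unfolding rev_act_def by auto
next
  note A = assms(1,3)
  show "sim act = approx act"
  proof (intro ext iffI)
    fix P Q assume "sim act P Q"
    then have s1: "sim act (fst P, snd P) Q" "sim act (fst P, snd P) P" unfolding sim_def by simp_all
    have "cls_ge act Q P" unfolding cls_ge_def using s1 order_refl by blast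
    moreover have "cls_ge act P Q" unfolding cls_ge_def using s1 order_refl by blast
    ultimately show "approx act P Q" unfolding approx_def by blast
  next
    fix P Q assume "approx act P Q"
    then have g1: "cls_ge act P Q" and g2: "cls_ge act Q P" unfolding approx_def by auto
    obtain x0 w0 where P0: "nf act P = (x0, w0)" by fastforce
    obtain y0 v0 where Q0: "nf act Q = (y0, v0)" by fastforce
    from cls_ge_nf[OF assms(1,3,2) g1] P0 obtain y' where
      y': "y' \<le> x0" "nf act (y', w0) = (y0, v0)" using Q0 by auto
    from cls_ge_nf[OF assms(1,3,2) g2] Q0 obtain x' where
      x': "x' \<le> y0" "nf act (x', v0) = (x0, w0)" using P0 by auto
    from nf_isnf[OF A, of "(y', w0)"] y'(2) obtain q where
      q: "w0 = v0 @ q" "act q y' = Some y0" unfolding isnf_def by auto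
    from nf_isnf[OF A, of "(x', v0)"] x'(2) obtain r where
      r: "v0 = w0 @ r" "act r x' = Some x0" unfolding isnf_def by auto
    from q(1) r(1) have "q = []" "r = []" by auto
    then have "y0 = y'" "x0 = x'" using q(2) r(2) lpa_nil[OF assms(1)] by auto
    then have "x0 \<le> y0" "y0 \<le> x0" using x'(1) y'(1) by simp_all
    then have "x0 = y0" by (rule order.antisym)
    moreover have "w0 = v0" using q(1) \<open>q = []\<close> by simp
    ultimately have "nf act P = nf act Q" using P0 Q0 by simp
    then show "sim act P Q" unfolding sim_nf[OF A] .
  qed
qed

end
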